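(* Let $n$ and $s$ be sufficiently large and $0<p,\varepsilon<1$. Suppose $G$ is an $n$-vertex $(\varepsilon,s)$-expander and $\varepsilon ps\ge10^5(\log n)^3$. Let $H$ be the random spanning subgraph of $G$ (with $V(H)=V(G)$) containing each edge of $G$ independently with probability $p$, and let $s'=\frac{\varepsilon ps}{10^4(\log n)^2}$. Then the probability that $H$ is not an $(\frac{\varepsilon}{4},s')$-expander is less than $2/n$.
   Context: Logarithms are base 2. For $U\subseteq V(G)$, $N_G(U)$ is the set of vertices outside $U$ with a neighbour in $U$; $G-F$ is $G$ with edge set $F$ deleted. An $n$-vertex graph $G$ is an $(\varepsilon,s)$-expander if for every $U\subseteq V(G)$, $F\subseteq E(G)$ with $1\le|U|\le\frac23n$ and $|F|\le s|U|$ we have $|N_{G-F}(U)|\ge\varepsilon|U|/(\log n)^2$. *)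

theory Defs
  imports Complex_Main
begin

definition simple_graph :: "'a set \<Rightarrow> 'a set set \<Rightarrow> bool" where
  "simple_graph V E \<longleftrightarrow> finite V \<and> (\<forall>e\<in>E. e \<subseteq> V \<and> card e = 2)"

definition nbhd :: "'a set \<Rightarrow> 'a set set \<Rightarrow> 'a set \<Rightarrow> 'a set" where
  "nbhd V E U = {v \<in> V - U. \<exists>u\<in>U. {u, v} \<in> E}"

definition expander :: "real \<Rightarrow> real \<Rightarrow> 'a set \<Rightarrow> 'a set set \<Rightarrow> bool" where
  "expander eps s V E \<longleftrightarrow>
     (\<forall>U F. U \<subseteq> V \<and> F \<subseteq> E \<and> 1 \<le> card U \<and> real (card U) \<le> 2/3 * real (card V)
        \<and> real (card F) \<le> s * real (card U)
        \<longrightarrow> real (card (nbhd V (E - F) U)) \<ge> eps * real (card U) / (log 2 (real (card V)))^2)"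

text \<open>Probability that the random spanning subgraph of (V,E), keeping each edge
independently with probability p, has property P (P applied to its edge set).\<close>
definition rand_subgraph_prob :: "real \<Rightarrow> 'a set set \<Rightarrow> ('a set set \<Rightarrow> bool) \<Rightarrow> real" where
  "rand_subgraph_prob p E P =
     (\<Sum>H\<in>{H. H \<subseteq> E \<and> P H}. p ^ card H * (1 - p) ^ card (E - H))"

end

theory Submission imports Defs begin

definition wt :: "real \<Rightarrow> 'a set set \<Rightarrow> 'a set set \<Rightarrow> real" where
  "wt p E H = p ^ card H * (1 - p) ^ card (E - H)"

lemma rsp_alt: "finite E \<Longrightarrow> rand_subgraph_prob p E P = (\<Sum>H\<in>Pow E. if P H then wt p E H else 0)"
proof -
  assume f: "finite E"
  have "{H. H \<subseteq> E \<and> P H} = {H\<in>Pow E. P H}" by auto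
  thus ?thesis unfolding rand_subgraph_prob_def wt_def using sum.inter_filter[OF finite_Pow_iff[THEN iffD2, OF f]]
    by simp
qed

lemma wt_nonneg: "0 \<le> p \<Longrightarrow> p \<le> 1 \<Longrightarrow> 0 \<le> wt p E H"
  unfolding wt_def by simp

lemma union_bound:
  assumes fE: "finite E" and fI: "finite I" and p: "0 \<le> p" "p \<le> 1"
    and cov: "\<And>H. H \<subseteq> E \<Longrightarrow> P H \<Longrightarrow> \<exists>i\<in>I. Q i H"
  shows "rand_subgraph_prob p E P \<le> (\<Sum>i\<in>I. rand_subgraph_prob p E (Q i))"
proof -
  have "rand_subgraph_prob p E P = (\<Sum>H\<in>Pow E. if P H then wt p E H else 0)" using rsp_alt[OF fE] .
  also have "\<dots> \<le> (\<Sum>H\<in>Pow E. \<Sum>i\<in>I. if Q i H then wt p E H else 0)"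
  proof (rule sum_mono)
    fix H assume H: "H \<in> Pow E"
    show "(if P H then wt p E H else 0) \<le> (\<Sum>i\<in>I. if Q i H then wt p E H else 0)"
    proof (cases "P H")
      case True
      then obtain i where i: "i \<in> I" "Q i H" using cov H by blast
      have "(if Q i H then wt p E H else 0) \<le> (\<Sum>i\<in>I. if Q i H then wt p E H else 0)"
        by (rule member_le_sum[OF i(1)]) (use wt_nonneg[OF p] fI in auto)
      thus ?thesis using True i by simp
    next
      case False thus ?thesis by (auto intro!: sum_nonneg simp: wt_nonneg[OF p])
    qed
  qed
  also have "\<dots> = (\<Sum>i\<in>I. \<Sum>H\<in>Pow E. if Q i H then wt p E H else 0)" by (rule sum.swap)
  also have "\<dots> = (\<Sum>i\<in>I. rand_subgraph_prob p E (Q i))" using rsp_alt[OF fE] by simp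
  finally show ?thesis .
qed

lemma mgf:
  assumes fE: "finite E" and B: "B \<subseteq> E"
  shows "(\<Sum>H\<in>Pow E. wt p E H * a ^ card (H \<inter> B)) = (1 - p + p * a) ^ card B"
proof -
  have fB: "finite B" using fE B finite_subset by blast
  have "(\<Prod>e\<in>E. p * (if e \<in> B then a else 1) + (1 - p))
      = (\<Sum>H\<in>Pow E. (\<Prod>e\<in>H. p * (if e \<in> B then a else 1)) * (\<Prod>e\<in>E-H. (1 - p)))"
    by (rule prod_add[OF fE])
  also have "\<dots> = (\<Sum>H\<in>Pow E. wt p E H * a ^ card (H \<inter> B))"
  proof (rule sum.cong[OF refl])
    fix H assume H: "H \<in> Pow E"
    have fH: "finite H" using H fE finite_subset by auto
    have "(\<Prod>e\<in>H. p * (if e \<in> B then a else 1)) = p ^ card H * (\<Prod>e\<in>H. (if e \<in> B then a else 1))"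
      by (simp add: prod.distrib)
    also have "(\<Prod>e\<in>H. (if e \<in> B then a else 1)) = a ^ card (H \<inter> B)"
      using prod.If_cases[OF fH, of "\<lambda>e. e \<in> B" "\<lambda>_. a" "\<lambda>_. 1"] by (simp add: Int_def)
    finally show "(\<Prod>e\<in>H. p * (if e \<in> B then a else 1)) * (\<Prod>e\<in>E-H. (1 - p)) = wt p E H * a ^ card (H \<inter> B)"
      unfolding wt_def by simp
  qed
  finally have 1: "(\<Sum>H\<in>Pow E. wt p E H * a ^ card (H \<inter> B)) = (\<Prod>e\<in>E. p * (if e \<in> B then a else 1) + (1 - p))" by simp
  have "(\<Prod>e\<in>E. p * (if e \<in> B then a else 1) + (1 - p)) = (\<Prod>e\<in>E. (if e \<in> B then p*a + (1-p) else 1))"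
    by (rule prod.cong) auto
  also have "\<dots> = (p*a + (1-p)) ^ card (E \<inter> B)"
    using prod.If_cases[OF fE, of "\<lambda>e. e \<in> B" "\<lambda>_. p*a + (1-p)" "\<lambda>_. 1"] by (simp add: Int_def)
  also have "E \<inter> B = B" using B by auto
  finally show ?thesis using 1 by (simp add: algebra_simps)
qed

lemma gen_fun: "finite V \<Longrightarrow> (\<Sum>U\<in>Pow V. (y::real) ^ card U) = (1 + y) ^ card V"
  using prod_add[of V "\<lambda>_. y" "\<lambda>_. 1"] by (simp add: add.commute)

lemma tail:
  assumes fE: "finite E" and B: "B \<subseteq> E" and p: "0 \<le> p" "p \<le> 1"
  shows "rand_subgraph_prob p E (\<lambda>H. real (card (H \<inter> B)) \<le> t) \<le> exp (t - p * real (card B) / 2)"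
proof -
  let ?a = "exp (-1) :: real"
  have "rand_subgraph_prob p E (\<lambda>H. real (card (H \<inter> B)) \<le> t)
     = (\<Sum>H\<in>Pow E. if real (card (H \<inter> B)) \<le> t then wt p E H else 0)" using rsp_alt[OF fE] .
  also have "\<dots> \<le> (\<Sum>H\<in>Pow E. exp t * (wt p E H * ?a ^ card (H \<inter> B)))"
  proof (rule sum_mono)
    fix H
    have w: "0 \<le> wt p E H" using wt_nonneg[OF p] .
    have e: "?a ^ card (H \<inter> B) = exp (- real (card (H \<inter> B)))"
      by (simp add: exp_of_nat_mult[symmetric])
    show "(if real (card (H \<inter> B)) \<le> t then wt p E H else 0) \<le> exp t * (wt p E H * ?a ^ card (H \<inter> B))"
    proof (cases "real (card (H \<inter> B)) \<le> t")
      case True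
      have "1 \<le> exp t * exp (- real (card (H \<inter> B)))" using True by (simp add: exp_add[symmetric])
      hence "wt p E H * 1 \<le> wt p E H * (exp t * exp (- real (card (H \<inter> B))))"
        using w by (intro mult_left_mono) auto
      thus ?thesis using True e by (simp add: algebra_simps)
    qed (use w in simp)
  qed
  also have "\<dots> = exp t * (1 - p + p * ?a) ^ card B"
    by (simp add: sum_distrib_left[symmetric] mgf[OF fE B])
  also have "\<dots> \<le> exp t * exp (- p / 2) ^ card B"
  proof -
    have "2 \<le> exp (1::real)" using exp_ge_add_one_self[of 1] by simp
    hence "?a \<le> 1/2" by (simp add: exp_minus field_simps)
    hence "p * ?a \<le> p * (1/2)" using p by (intro mult_left_mono) auto
    hence "1 - p + p * ?a \<le> 1 + (- p / 2)" by linarith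
    also have "\<dots> \<le> exp (- p / 2)" by (rule exp_ge_add_one_self)
    finally have "1 - p + p * ?a \<le> exp (- p / 2)" .
    moreover have "0 \<le> 1 - p + p * ?a" using p by (simp add: add_nonneg_nonneg)
    ultimately show ?thesis by (intro mult_left_mono power_mono) auto
  qed
  also have "\<dots> = exp (t - p * real (card B) / 2)"
    by (simp add: exp_of_nat_mult[symmetric] exp_add[symmetric] algebra_simps)
  finally show ?thesis .
qed

definition Bset :: "'a set \<Rightarrow> 'a set set \<Rightarrow> 'a set \<Rightarrow> 'a set \<Rightarrow> 'a set set" where
  "Bset V E U X = {e\<in>E. \<exists>u\<in>U. \<exists>v\<in>V-(U\<union>X). e = {u,v}}"

lemma expB:
  assumes ex: "expander eps s V E" and U: "U \<subseteq> V" "1 \<le> card U" "real (card U) \<le> 2/3 * real (card V)"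
    and X: "X \<subseteq> V" "finite V" "real (card X) < eps * real (card U) / (log 2 (real (card V)))^2"
  shows "real (card (Bset V E U X)) > s * real (card U)"
proof (rule ccontr)
  assume "\<not> ?thesis"
  hence "real (card (Bset V E U X)) \<le> s * real (card U)" by simp
  moreover have "Bset V E U X \<subseteq> E" unfolding Bset_def by auto
  ultimately have "real (card (nbhd V (E - Bset V E U X) U)) \<ge> eps * real (card U) / (log 2 (real (card V)))^2"
    using ex U unfolding expander_def by (elim allE[of _ U] allE[of _ "Bset V E U X"]) simp
  moreover have "nbhd V (E - Bset V E U X) U \<subseteq> X"
  proof
    fix v assume "v \<in> nbhd V (E - Bset V E U X) U"
    then obtain u where v: "v \<in> V" "v \<notin> U" "u \<in> U" "{u,v} \<in> E" "{u,v} \<notin> Bset V E U X"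
      unfolding nbhd_def by auto
    show "v \<in> X"
    proof (rule ccontr)
      assume "v \<notin> X"
      hence "{u,v} \<in> Bset V E U X" using v unfolding Bset_def by blast
      thus False using v by simp
    qed
  qed
  hence "card (nbhd V (E - Bset V E U X) U) \<le> card X" by (rule card_mono[OF finite_subset[OF X(1) X(2)]])
  ultimately show False using X(3) by linarith
qed

lemma bad:
  assumes fE: "finite E" and H: "H \<subseteq> E" and ne: "\<not> expander eps' s' V H"
  shows "\<exists>U X. U \<subseteq> V \<and> 1 \<le> card U \<and> real (card U) \<le> 2/3 * real (card V) \<and> X \<subseteq> V
     \<and> real (card X) < eps' * real (card U) / (log 2 (real (card V)))^2
     \<and> real (card (H \<inter> Bset V E U X)) \<le> s' * real (card U)"
proof -
  obtain U F where U: "U \<subseteq> V" "F \<subseteq> H" "1 \<le> card U" "real (card U) \<le> 2/3 * real (card V)"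
    "real (card F) \<le> s' * real (card U)"
    "real (card (nbhd V (H - F) U)) < eps' * real (card U) / (log 2 (real (card V)))^2"
  proof -
    from ne obtain U F where "\<not> (U \<subseteq> V \<and> F \<subseteq> H \<and> 1 \<le> card U \<and> real (card U) \<le> 2/3 * real (card V)
        \<and> real (card F) \<le> s' * real (card U)
        \<longrightarrow> real (card (nbhd V (H - F) U)) \<ge> eps' * real (card U) / (log 2 (real (card V)))^2)"
      unfolding expander_def by blast
    hence "U \<subseteq> V" "F \<subseteq> H" "1 \<le> card U" "real (card U) \<le> 2/3 * real (card V)"
      "real (card F) \<le> s' * real (card U)"
      "real (card (nbhd V (H - F) U)) < eps' * real (card U) / (log 2 (real (card V)))^2"
      by (simp_all add: not_le)
    thus ?thesis by (rule that)
  qed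
  define X where "X = nbhd V (H - F) U"
  have XV: "X \<subseteq> V" unfolding X_def nbhd_def by auto
  have "H \<inter> Bset V E U X \<subseteq> F"
  proof
    fix e assume e: "e \<in> H \<inter> Bset V E U X"
    then obtain u v where uv: "u \<in> U" "v \<in> V" "v \<notin> U" "v \<notin> X" "e = {u,v}" unfolding Bset_def by auto
    show "e \<in> F"
    proof (rule ccontr)
      assume "e \<notin> F"
      hence "e \<in> H - F" using e by simp
      hence "v \<in> X" using uv unfolding X_def nbhd_def by blast
      thus False using uv by simp
    qed
  qed
  moreover have "finite F" using finite_subset[OF U(2) finite_subset[OF H fE]] .
  ultimately have "card (H \<inter> Bset V E U X) \<le> card F" by (simp add: card_mono)
  hence "real (card (H \<inter> Bset V E U X)) \<le> s' * real (card U)" using U(5) by linarith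
  moreover have "real (card X) < eps' * real (card U) / (log 2 (real (card V)))^2" using U(6) X_def by simp
  ultimately show ?thesis using U(1,3,4) XV by blast
qed

lemma final_sum:
  assumes n: "real n \<ge> 4" and fV: "finite V" and cV: "card V = n"
  shows "(\<Sum>i\<in>Pow V \<times> Pow V. (1/real n) * ((1/real n)^4)^card (fst i) * ((1/real n)^4)^card (snd i)) < 2 / real n"
proof -
  define y where "y = (1/real n)^4"
  have npos: "real n > 0" using n by simp
  have "(\<Sum>i\<in>Pow V \<times> Pow V. (1/real n) * y^card (fst i) * y^card (snd i))
      = (\<Sum>U\<in>Pow V. \<Sum>X\<in>Pow V. (1/real n) * y^card U * y^card X)"
    by (simp add: sum.cartesian_product split_beta)
  also have "\<dots> = (1/real n) * ((\<Sum>U\<in>Pow V. y^card U) * (\<Sum>X\<in>Pow V. y^card X))"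
    by (subst sum_product) (simp add: sum_distrib_left mult.assoc)
  also have "\<dots> = (1/real n) * ((1+y)^n * (1+y)^n)" using gen_fun[OF fV] cV by simp
  also have "\<dots> < (1/real n) * 2"
  proof -
    have y0: "0 \<le> y" unfolding y_def by simp
    have "(1+y)^n \<le> exp y ^ n" using y0 by (intro power_mono) (auto simp: add.commute)
    also have "\<dots> = exp (real n * y)" by (simp add: exp_of_nat_mult)
    finally have 1: "(1+y)^n \<le> exp (real n * y)" .
    have "real n * y = 1 / (real n)^3" unfolding y_def using npos by (simp add: power_divide field_simps power_eq_if eval_nat_numeral)
    moreover have "(real n)^3 \<ge> 4^3" using n by (intro power_mono) auto
    moreover have "1 / (real n)^3 \<le> 1 / 4^3" using \<open>(real n)^3 \<ge> 4^3\<close> using npos by (intro divide_left_mono) auto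
    ultimately have ny1: "real n * y \<le> 1/64" by simp
    have ny: "real n * y \<le> 1/64" "0 \<le> real n * y" using ny1 npos y0 by auto
    have "(1+y)^n * (1+y)^n \<le> exp (real n * y) * exp (real n * y)"
      using 1 y0 by (intro mult_mono) auto
    also have "\<dots> = exp (2 * (real n * y))" by (simp add: exp_add[symmetric])
    also have "\<dots> \<le> 1 + 2 * norm (2 * (real n * y))"
      using exp_bound_lemma[of "2 * (real n * y)"] ny by simp
    also have "\<dots> < 2" using ny by simp
    finally show ?thesis using npos by (simp add: divide_strict_right_mono)
  qed
  finally show ?thesis unfolding y_def by simp
qed

theorem mainTheorem17:
  shows "\<exists>N::real. \<forall>(n::nat) (s::real) (p::real) (eps::real) (V::'a set) (E::'a set set).
     real n \<ge> N \<longrightarrow> s \<ge> N \<longrightarrow> 0 < p \<longrightarrow> p < 1 \<longrightarrow> 0 < eps \<longrightarrow> eps < 1 \<longrightarrow>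
     simple_graph V E \<longrightarrow> card V = n \<longrightarrow> expander eps s V E \<longrightarrow>
     eps * p * s \<ge> 10^5 * (log 2 (real n))^3 \<longrightarrow>
     rand_subgraph_prob p E
       (\<lambda>H. \<not> expander (eps / 4) (eps * p * s / (10^4 * (log 2 (real n))^2)) V H)
     < 2 / real n"
proof (rule exI[of _ 4], intro allI impI)
  fix n :: nat and s p eps :: real and V :: "'a set" and E :: "'a set set"
  assume n: "real n \<ge> 4" and s: "s \<ge> 4" and p: "0 < p" "p < 1" and eps: "0 < eps" "eps < 1"
    and sg: "simple_graph V E" and cV: "card V = n" and ex: "expander eps s V E"
    and big: "eps * p * s \<ge> 10^5 * (log 2 (real n))^3"
  define L where "L = log 2 (real n)"
  define s' where "s' = eps * p * s / (10^4 * L^2)"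
  have fV: "finite V" using sg unfolding simple_graph_def by simp
  have "E \<subseteq> Pow V" using sg unfolding simple_graph_def by auto
  hence fE: "finite E" using fV finite_subset by (metis finite_Pow_iff)
  have npos: "real n > 0" using n by simp
  have L1: "L \<ge> 1" unfolding L_def using n by simp
  have lnL: "ln (real n) \<le> L"
  proof -
    have "ln (real n) \<ge> 0" using n by simp
    moreover have "0 < ln (2::real)" "ln (2::real) < 1" using ln_2_less_1 by auto
    ultimately have "ln (real n) / 1 \<le> ln (real n) / ln 2" by (intro divide_left_mono) auto
    thus ?thesis unfolding L_def log_def by simp
  qed
  have L2: "L^2 \<ge> 1" using L1 by (simp add: one_le_power)
  have "L * 1 \<le> L * L^2" using L1 L2 by (intro mult_left_mono) auto
  hence L3: "L^3 \<ge> L" by (simp add: power3_eq_cube power2_eq_square mult.assoc)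
  have ps: "p * s \<ge> 10^5 * L^3"
  proof -
    have "eps * (p * s) \<le> 1 * (p * s)" using eps p s by (intro mult_right_mono) auto
    thus ?thesis using big unfolding L_def by (simp add: mult.assoc)
  qed
  have "ln (real n) \<ge> 0" using n by simp
  hence psln: "p * s \<ge> 36 * ln (real n)" using ps L3 lnL by (simp add: power_numeral)
  have s'le: "s' \<le> p * s / 4"
  proof -
    have "s' \<le> eps * p * s / (10^4)" unfolding s'_def using eps p s L2
      by (intro divide_left_mono) auto
    also have "\<dots> \<le> p * s / 4" using eps p s by (simp add: field_simps mult_right_mono)
    finally show ?thesis .
  qed
  define C where "C = (\<lambda>U X. U \<subseteq> V \<and> 1 \<le> card U \<and> real (card U) \<le> 2/3 * real (card V) \<and> X \<subseteq> V
     \<and> real (card X) < eps/4 * real (card U) / L^2)"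
  define Q where "Q = (\<lambda>i H. C (fst i) (snd i) \<and> real (card (H \<inter> Bset V E (fst i) (snd i))) \<le> s' * real (card (fst i)))"
  define g where "g = (\<lambda>i::'a set \<times> 'a set. (1/real n) * ((1/real n)^4)^card (fst i) * ((1/real n)^4)^card (snd i))"
  have "rand_subgraph_prob p E (\<lambda>H. \<not> expander (eps / 4) s' V H) \<le> (\<Sum>i\<in>Pow V \<times> Pow V. rand_subgraph_prob p E (Q i))"
  proof (rule union_bound[OF fE _ ])
    show "finite (Pow V \<times> Pow V)" using fV by simp
    show "0 \<le> p" "p \<le> 1" using p by auto
    fix H assume H: "H \<subseteq> E" "\<not> expander (eps / 4) s' V H"
    from bad[OF fE H] obtain U X where UX: "U \<subseteq> V" "1 \<le> card U" "real (card U) \<le> 2/3 * real (card V)" "X \<subseteq> V"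
      "real (card X) < eps/4 * real (card U) / (log 2 (real (card V)))^2"
      "real (card (H \<inter> Bset V E U X)) \<le> s' * real (card U)" by blast
    hence "Q (U, X) H" unfolding Q_def C_def L_def using cV by simp
    thus "\<exists>i\<in>Pow V \<times> Pow V. Q i H" using UX by auto
  qed
  also have "\<dots> \<le> (\<Sum>i\<in>Pow V \<times> Pow V. g i)"
  proof (rule sum_mono)
    fix i assume i: "i \<in> Pow V \<times> Pow V"
    obtain U X where iUX: "i = (U, X)" by (cases i)
    have g0: "0 \<le> g i" unfolding g_def by simp
    show "rand_subgraph_prob p E (Q i) \<le> g i"
    proof (cases "C U X")
      case False
      hence "Q i = (\<lambda>H. False)" unfolding Q_def iUX by auto
      thus ?thesis using g0 rsp_alt[OF fE] by simp
    next
      case True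
      have CUX: "U \<subseteq> V" "1 \<le> card U" "real (card U) \<le> 2/3 * real (card V)" "X \<subseteq> V"
        "real (card X) < eps/4 * real (card U) / L^2" using True unfolding C_def by auto
      define k where "k = card U"
      have k1: "1 \<le> k" using CUX k_def by simp
      have Qeq: "Q i = (\<lambda>H. real (card (H \<inter> Bset V E U X)) \<le> s' * real k)"
        unfolding Q_def iUX k_def using True by simp
      have BE: "Bset V E U X \<subseteq> E" unfolding Bset_def by auto
      have Xlt: "real (card X) < eps * real (card U) / (log 2 (real (card V)))^2"
      proof -
        have "eps/4 * real (card U) / L^2 \<le> eps * real (card U) / L^2"
          using eps L2 by (intro divide_right_mono mult_right_mono) auto
        thus ?thesis using CUX cV L_def by simp
      qed
      have Bbig: "real (card (Bset V E U X)) > s * real k"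
        using expB[OF ex CUX(1,2,3) CUX(4) fV Xlt] k_def by simp
      have Xk: "card X \<le> k"
      proof -
        have a: "0 \<le> eps/4 * real (card U)" using eps by simp
        have "eps/4 * real (card U) / L^2 \<le> eps/4 * real (card U)"
        proof -
          have "eps/4 * real (card U) * 1 \<le> eps/4 * real (card U) * L^2" using mult_left_mono[OF L2 a] .
          moreover have "L^2 > 0" using L1 by simp
          ultimately show ?thesis by (simp add: divide_le_eq)
        qed
        also have "\<dots> \<le> 1 * real (card U)" using eps by (intro mult_right_mono) auto
        finally have "real (card X) < real k" using CUX k_def by simp
        thus ?thesis by simp
      qed
      have "rand_subgraph_prob p E (Q i) = rand_subgraph_prob p E (\<lambda>H. real (card (H \<inter> Bset V E U X)) \<le> s' * real k)"
        by (simp add: Qeq)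
      also have "\<dots> \<le> exp (s' * real k - p * real (card (Bset V E U X)) / 2)"
        using tail[OF fE BE] p by simp
      also have "\<dots> \<le> exp (- (p * s * real k / 4))"
      proof -
        have "s' * real k \<le> p * s / 4 * real k" using s'le k1 by (intro mult_right_mono) auto
        moreover have "p * (s * real k) \<le> p * real (card (Bset V E U X))" using Bbig p by (intro mult_left_mono) auto
        ultimately show ?thesis by (simp add: algebra_simps)
      qed
      also have "\<dots> \<le> exp (real (9 * k) * (- ln (real n)))"
      proof -
        have "36 * ln (real n) * real k \<le> p * s * real k" using psln k1 by (intro mult_right_mono) auto
        thus ?thesis by (simp add: mult_ac)
      qed
      also have "\<dots> = (1 / real n) ^ (9 * k)"
      proof -
        have "exp (- ln (real n)) = 1 / real n" using npos by (simp add: exp_minus inverse_eq_divide)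
        thus ?thesis by (simp only: exp_of_nat_mult)
      qed
      also have "\<dots> \<le> (1 / real n) ^ (1 + 4 * k + 4 * card X)"
        using n Xk k1 by (intro power_decreasing) auto
      also have "\<dots> = g i" unfolding g_def iUX k_def by (simp add: power_add power_mult)
      finally show ?thesis .
    qed
  qed
  also have "\<dots> < 2 / real n" unfolding g_def by (rule final_sum[OF n fV cV])
  finally show "rand_subgraph_prob p E
       (\<lambda>H. \<not> expander (eps / 4) (eps * p * s / (10^4 * (log 2 (real n))^2)) V H) < 2 / real n"
    unfolding s'_def L_def .
qed

end
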